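(* Let $\sigma$ be a closed convex curve in $\mathbb R^2$ and suppose that, near $q=(0,0)\in\sigma$, $\sigma$ is the graph of a convex function $f$ with $f(0)=0$, such that $f'(0)=0$ and the one-sided derivatives $f'_\pm$ are differentiable at $0$ with derivative $A\ge0$ (so $f'_\pm(t)=At+o(t)$ as $t\to0$). Then the osculating curvature of $\sigma$ at $q$ exists and equals $A$.
   Context: For three points $p_1,p_2,p_3\in\mathbb R^2$ forming a triangle of area $\mathcal A$, $\chi_0(p_1,p_2,p_3)=\frac{4\mathcal A}{|p_1p_2||p_2p_3||p_3p_1|}$ (the curvature of the circle through them). The osculating curvature of $\sigma$ at $q$ is $\lim\chi_0(p,q,m)$ as $p,m\to q$ along $\sigma$ from opposite sides of $q$. *)

theory Defs
  imports "HOL-Analysis.Analysis"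
begin

definition tri_area :: "real \<times> real \<Rightarrow> real \<times> real \<Rightarrow> real \<times> real \<Rightarrow> real" where
  "tri_area p1 p2 p3 =
     \<bar>(fst p2 - fst p1) * (snd p3 - snd p1) - (fst p3 - fst p1) * (snd p2 - snd p1)\<bar> / 2"

text \<open>Curvature of the circle through three points.\<close>
definition chi0 :: "real \<times> real \<Rightarrow> real \<times> real \<Rightarrow> real \<times> real \<Rightarrow> real" where
  "chi0 p1 p2 p3 = 4 * tri_area p1 p2 p3 / (dist p1 p2 * dist p2 p3 * dist p3 p1)"

definition closed_convex_curve :: "(real \<times> real) set \<Rightarrow> bool" where
  "closed_convex_curve \<sigma> \<longleftrightarrow>
     (\<exists>K. compact K \<and> convex K \<and> interior K \<noteq> {} \<and> \<sigma> = frontier K)"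

definition rderiv :: "(real \<Rightarrow> real) \<Rightarrow> real \<Rightarrow> real" where
  "rderiv f t = Lim (at_right 0) (\<lambda>h. (f (t + h) - f t) / h)"

definition lderiv :: "(real \<Rightarrow> real) \<Rightarrow> real \<Rightarrow> real" where
  "lderiv f t = Lim (at_left 0) (\<lambda>h. (f (t + h) - f t) / h)"

text \<open>Osculating curvature of \<sigma> at q equals k: limit of chi0(p,q,m) as p, m \<rightarrow> q
  along \<sigma>, p and m on opposite sides of q (here: given by the sign of the
  x-coordinate, since near q the curve is a graph over the x-axis).\<close>
definition osc_curvature_graph :: "(real \<times> real) set \<Rightarrow> real \<times> real \<Rightarrow> real \<Rightarrow> bool" where
  "osc_curvature_graph \<sigma> q k \<longleftrightarrow>
     ((\<lambda>(p, m). chi0 p q m) \<longlongrightarrow> k)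
       (at (q, q) within {(p, m). p \<in> \<sigma> \<and> m \<in> \<sigma> \<and> fst p < fst q \<and> fst q < fst m})"

end

theory Submission
  imports Defs
begin
lemma slope_swap: "((a::real) - b) / (c - d) = (b - a) / (d - c)"
  by (metis minus_diff_eq minus_divide_divide)

lemma slope_mono:
  fixes f :: "real \<Rightarrow> real"
  assumes cv: "convex_on I f" and I: "a \<in> I" "b \<in> I" "c \<in> I" "d \<in> I"
    and o: "a < b" "c < d" "a \<le> c" "b \<le> d"
  shows "(f b - f a) / (b - a) \<le> (f d - f c) / (d - c)"
proof -
  have 1: "(f b - f a) / (b - a) \<le> (f d - f a) / (d - a)"
  proof (cases "b < d")
    case True
    from convex_on_slope_le(1)[OF cv I(1) I(4) o(1) True] show ?thesis
      by (simp add: slope_swap)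
  next
    case False then show ?thesis using o by simp
  qed
  have 2: "(f d - f a) / (d - a) \<le> (f d - f c) / (d - c)"
  proof (cases "a < c")
    case True
    from convex_on_slope_le(2)[OF cv I(1) I(4) True o(2)] show ?thesis
      by (simp add: slope_swap)
  next
    case False then show ?thesis using o by simp
  qed
  from 1 2 show ?thesis by linarith
qed

lemma rl_deriv_bounds:
  fixes f :: "real \<Rightarrow> real"
  assumes cv: "convex_on {-\<delta><..<\<delta>} f" and tu: "-\<delta> < t" "t < u" "u < \<delta>"
  shows "Lim (at_right 0) (\<lambda>h. (f (t + h) - f t) / h) \<le> (f u - f t) / (u - t)"
    and "(f u - f t) / (u - t) \<le> Lim (at_left 0) (\<lambda>h. (f (u + h) - f u) / h)"
proof -
  let ?I = "{-\<delta><..<\<delta>}"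
  define q where "q = (\<lambda>h. (f (t + h) - f t) / h)"
  have qs: "q h = (f (t + h) - f t) / ((t + h) - t)" for h unfolding q_def by simp
  have qn: "q h = (f t - f (t + h)) / (t - (t + h))" for h unfolding q_def by (simp add: field_split_simps)
  define h0 where "h0 = (-\<delta> - t) / 2"
  have h0: "h0 < 0" "-\<delta> < t + h0" using tu unfolding h0_def by (auto simp: field_simps)
  have "(q \<longlongrightarrow> Inf (q ` ({0<..} \<inter> {..<\<delta> - t}))) (at 0 within ({0<..} \<inter> {..<\<delta> - t}))"
  proof (rule Lim_right_bound)
    fix a b assume "a \<in> {..<\<delta> - t}" "b \<in> {..<\<delta> - t}" "0 < a" "a \<le> b"
    then show "q a \<le> q b" unfolding qs
      by (intro slope_mono[OF cv]) (use tu in auto)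
  next
    fix a assume "a \<in> {..<\<delta> - t}" "0 < a"
    then show "q h0 \<le> q a" unfolding qs[of a] qn[of h0]
      by (intro slope_mono[OF cv]) (use tu h0 in auto)
  qed
  moreover have "at 0 within ({0<..} \<inter> {..<\<delta> - t}) = at_right (0::real)"
    by (rule at_within_nhd[where S="{..<\<delta> - t}"]) (use tu in auto)
  ultimately have L: "(q \<longlongrightarrow> Inf (q ` ({0<..} \<inter> {..<\<delta> - t}))) (at_right 0)" by simp
  have "Inf (q ` ({0<..} \<inter> {..<\<delta> - t})) \<le> q (u - t)"
  proof (rule tendsto_upperbound[OF L])
    show "\<forall>\<^sub>F i in at_right 0. q i \<le> q (u - t)"
    proof -
      have ev: "eventually (\<lambda>x. x \<in> {0<..<u - t}) (at_right (0::real))"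
        using tu by (intro eventually_at_right_real) simp
      then show ?thesis
    proof (elim eventually_mono)
      fix h assume "h \<in> {0<..<u - t}"
      then show "q h \<le> q (u - t)" unfolding qs
        by (intro slope_mono[OF cv]) (use tu in auto)
    qed
    qed
  qed simp
  then show "Lim (at_right 0) (\<lambda>h. (f (t + h) - f t) / h) \<le> (f u - f t) / (u - t)"
    using tendsto_Lim[OF _ L] unfolding q_def by simp
next
  define q where "q = (\<lambda>h. (f (u + h) - f u) / h)"
  have qs: "q h = (f (u + h) - f u) / ((u + h) - u)" for h unfolding q_def by simp
  have qn: "q h = (f u - f (u + h)) / (u - (u + h))" for h unfolding q_def by (simp add: field_split_simps)
  define h1 where "h1 = (\<delta> - u) / 2"
  have h1: "0 < h1" "u + h1 < \<delta>" using tu unfolding h1_def by (auto simp: field_simps)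
  have "(q \<longlongrightarrow> Sup (q ` ({..<0} \<inter> {-\<delta> - u<..}))) (at 0 within ({..<0} \<inter> {-\<delta> - u<..}))"
  proof (rule Lim_left_bound)
    fix a b assume "a \<in> {-\<delta> - u<..}" "b \<in> {-\<delta> - u<..}" "b < 0" "a \<le> b"
    then show "q a \<le> q b" unfolding qn
      by (intro slope_mono[OF cv]) (use tu in auto)
  next
    fix a assume "a \<in> {-\<delta> - u<..}" "a < 0"
    then show "q a \<le> q h1" unfolding qn[of a] qs[of h1]
      by (intro slope_mono[OF cv]) (use tu h1 in auto)
  qed
  moreover have "at 0 within ({..<0} \<inter> {-\<delta> - u<..}) = at_left (0::real)"
    by (rule at_within_nhd[where S="{-\<delta> - u<..}"]) (use tu in auto)
  ultimately have L: "(q \<longlongrightarrow> Sup (q ` ({..<0} \<inter> {-\<delta> - u<..}))) (at_left 0)" by simp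
  have "q (t - u) \<le> Sup (q ` ({..<0} \<inter> {-\<delta> - u<..}))"
  proof (rule tendsto_lowerbound[OF L])
    show "\<forall>\<^sub>F i in at_left 0. q (t - u) \<le> q i"
    proof -
      have ev: "eventually (\<lambda>x. x \<in> {t - u<..<0}) (at_left (0::real))"
        using tu by (intro eventually_at_left_real) simp
      then show ?thesis
    proof (elim eventually_mono)
      fix h assume "h \<in> {t - u<..<0}"
      then show "q (t - u) \<le> q h" unfolding qn
        by (intro slope_mono[OF cv]) (use tu in auto)
    qed
    qed
  qed simp
  moreover have "q (t - u) = (f u - f t) / (u - t)" unfolding q_def by (simp add: field_split_simps)
  ultimately show "(f u - f t) / (u - t) \<le> Lim (at_left 0) (\<lambda>h. (f (u + h) - f u) / h)"
    using tendsto_Lim[OF _ L] unfolding q_def by simp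
qed

lemma step_mono:
  fixes g :: "real \<Rightarrow> real"
  assumes cont: "continuous_on {s..x} g" and sx: "s \<le> x"
    and step: "\<And>t. s \<le> t \<Longrightarrow> t < x \<Longrightarrow> \<exists>d>0. \<forall>h. 0 < h \<and> h < d \<longrightarrow> g (t + h) \<le> g t"
  shows "g x \<le> g s"
proof -
  define T where "T = {s..x} \<inter> g -` {..g s}"
  have cl: "closed T" unfolding T_def
    by (rule continuous_closed_preimage[OF cont]) auto
  have sT: "s \<in> T" using sx unfolding T_def by auto
  have bdd: "bdd_above T" unfolding T_def by (rule bdd_aboveI[of _ x]) auto
  define c where "c = Sup T"
  have cT: "c \<in> T" unfolding c_def using closed_contains_Sup[OF _ bdd cl] sT by auto
  have "c = x"
  proof (rule ccontr)
    assume "c \<noteq> x"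
    with cT have cx: "s \<le> c" "c < x" unfolding T_def by auto
    from step[OF cx] obtain d where d: "d > 0" "\<forall>h. 0 < h \<and> h < d \<longrightarrow> g (c + h) \<le> g c" by blast
    define h where "h = min d (x - c) / 2"
    have h: "0 < h" "h < d" "h < x - c" using d cx unfolding h_def by auto
    have "g (c + h) \<le> g c" using d h by auto
    with cT h cx have "c + h \<in> T" unfolding T_def by auto
    then have "c + h \<le> c" unfolding c_def using bdd by (rule cSup_upper)
    with h show False by simp
  qed
  with cT show ?thesis unfolding T_def by auto
qed

lemma quad_approx:
  fixes \<phi> :: "real \<Rightarrow> real"
  assumes c0: "isCont \<phi> 0" and cont: "continuous_on {0<..<\<eta>} \<phi>" and z: "\<phi> 0 = 0"
    and e: "\<epsilon> > 0" and A: "A \<ge> 0"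
    and bnd: "\<And>t h. 0 < t \<Longrightarrow> 0 < h \<Longrightarrow> t + h < \<eta> \<Longrightarrow>
        h * (A - \<epsilon>) * t \<le> \<phi> (t + h) - \<phi> t \<and> \<phi> (t + h) - \<phi> t \<le> h * (A + \<epsilon>) * (t + h)"
    and x: "0 \<le> x" "x < \<eta>"
  shows "\<bar>\<phi> x - A / 2 * x^2\<bar> \<le> \<epsilon> * x^2"
proof (cases "x = 0")
  case True then show ?thesis using z by simp
next
  case False
  with x have x0: "0 < x" by simp
  define g1 where "g1 t = \<phi> t - (A/2 + \<epsilon>) * t^2" for t
  define g2 where "g2 t = (A/2 - \<epsilon>) * t^2 - \<phi> t" for t
  have stepd: "\<exists>d>0. \<forall>h. 0 < h \<and> h < d \<longrightarrow> g1 (t + h) \<le> g1 t \<and> g2 (t + h) \<le> g2 t"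
    if t: "0 < t" "t < \<eta>" for t
  proof -
    define d where "d = min (\<eta> - t) (\<epsilon> * t / (A + 1))"
    have "d > 0" unfolding d_def using t e A by auto
    moreover have "g1 (t + h) \<le> g1 t \<and> g2 (t + h) \<le> g2 t" if h: "0 < h" "h < d" for h
    proof -
      have th: "t + h < \<eta>" using h unfolding d_def by auto
      have "h < \<epsilon> * t / (A + 1)" using h unfolding d_def by auto
      then have "h * (A + 1) < \<epsilon> * t" using A by (simp add: field_simps)
      then have Ah: "A * h \<le> \<epsilon> * t" using h by (simp add: algebra_simps)
      have hAh: "h * (A * h) \<le> h * (\<epsilon> * t)" using Ah h by (intro mult_left_mono) auto
      have eth: "0 \<le> \<epsilon> * t * h" using e t h by simp
      have hh: "0 \<le> h * h" by simp
      from bnd[OF t(1) h(1) th] have b1: "\<phi> (t + h) - \<phi> t \<le> h * (A + \<epsilon>) * (t + h)"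
        and b2: "h * (A - \<epsilon>) * t \<le> \<phi> (t + h) - \<phi> t" by auto
      have e1: "(A/2 + \<epsilon>) * ((t+h)^2 - t^2) - h * (A + \<epsilon>) * (t + h) = \<epsilon> * t * h - h * (A * h) / 2"
        by (simp add: algebra_simps power2_eq_square)
      have e2: "h * (A - \<epsilon>) * t - (A/2 - \<epsilon>) * ((t+h)^2 - t^2) = \<epsilon> * t * h - h * (A * h) / 2 + \<epsilon> * (h * h)"
        by (simp add: algebra_simps power2_eq_square)
      have "\<epsilon> * (h * h) \<ge> 0" using e by simp
      show ?thesis unfolding g1_def g2_def using e1 e2 b1 b2 hAh eth hh \<open>\<epsilon> * (h * h) \<ge> 0\<close>
        by (simp add: algebra_simps)
    qed
    ultimately show ?thesis by blast
  qed
  have mono: "g1 x \<le> g1 s \<and> g2 x \<le> g2 s" if s: "0 < s" "s \<le> x" for s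
  proof -
    have co: "continuous_on {s..x} \<phi>"
      by (rule continuous_on_subset[OF cont]) (use s x in auto)
    have "g1 x \<le> g1 s"
    proof (rule step_mono[OF _ s(2)])
      show "continuous_on {s..x} g1" unfolding g1_def by (intro continuous_intros co)
      fix t assume "s \<le> t" "t < x"
      then show "\<exists>d>0. \<forall>h. 0 < h \<and> h < d \<longrightarrow> g1 (t + h) \<le> g1 t"
        using stepd[of t] s x by (meson less_le_trans order_less_trans)
    qed
    moreover have "g2 x \<le> g2 s"
    proof (rule step_mono[OF _ s(2)])
      show "continuous_on {s..x} g2" unfolding g2_def by (intro continuous_intros co)
      fix t assume "s \<le> t" "t < x"
      then show "\<exists>d>0. \<forall>h. 0 < h \<and> h < d \<longrightarrow> g2 (t + h) \<le> g2 t"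
        using stepd[of t] s x by (meson less_le_trans order_less_trans)
    qed
    ultimately show ?thesis by simp
  qed
  have ev: "eventually (\<lambda>s. s \<in> {0<..<x}) (at_right (0::real))"
    using x0 by (intro eventually_at_right_real) simp
  have cr: "(\<phi> \<longlongrightarrow> 0) (at_right 0)"
    using c0 z unfolding isCont_def by (auto intro: tendsto_within_subset)
  have t1: "(g1 \<longlongrightarrow> 0) (at_right 0)" unfolding g1_def
    using tendsto_diff[OF cr tendsto_mult[OF tendsto_const tendsto_power[OF tendsto_ident_at, of 2]]]
    by simp
  have t2: "(g2 \<longlongrightarrow> 0) (at_right 0)" unfolding g2_def
    using tendsto_diff[OF tendsto_mult[OF tendsto_const tendsto_power[OF tendsto_ident_at, of 2]] cr]
    by simp
  have "g1 x \<le> 0"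
    by (rule tendsto_lowerbound[OF t1]) (use ev mono in \<open>auto elim!: eventually_mono\<close>)
  moreover have "g2 x \<le> 0"
    by (rule tendsto_lowerbound[OF t2]) (use ev mono in \<open>auto elim!: eventually_mono\<close>)
  ultimately show ?thesis unfolding g1_def g2_def by (simp add: abs_le_iff algebra_simps)
qed


lemma lin_approx:
  fixes g :: "real \<Rightarrow> real"
  assumes d: "(g has_real_derivative A) (at 0)" and z: "g 0 = 0" and e: "\<epsilon> > 0"
  shows "\<exists>\<eta>>0. \<forall>t. \<bar>t\<bar> < \<eta> \<longrightarrow> \<bar>g t - A * t\<bar> \<le> \<epsilon> * \<bar>t\<bar>"
proof -
  have "((\<lambda>h. g h / h) \<longlongrightarrow> A) (at 0)" using d z unfolding DERIV_def by simp
  then have "eventually (\<lambda>h. dist (g h / h) A < \<epsilon>) (at 0)" using e by (simp add: tendsto_iff)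
  then obtain \<eta> where \<eta>: "\<eta> > 0" "\<And>h. h \<noteq> 0 \<Longrightarrow> dist h 0 < \<eta> \<Longrightarrow> dist (g h / h) A < \<epsilon>"
    unfolding eventually_at by auto
  have "\<bar>g t - A * t\<bar> \<le> \<epsilon> * \<bar>t\<bar>" if t: "\<bar>t\<bar> < \<eta>" for t
  proof (cases "t = 0")
    case True then show ?thesis using z by simp
  next
    case False
    then have "\<bar>g t / t - A\<bar> < \<epsilon>" using \<eta>(2)[of t] t by (simp add: dist_real_def)
    moreover have "\<bar>g t - A * t\<bar> = \<bar>t\<bar> * \<bar>g t / t - A\<bar>"
      using False by (simp add: abs_mult[symmetric] field_simps)
    ultimately show ?thesis using False by (simp add: mult_left_mono mult.commute)
  qed
  with \<eta> show ?thesis by blast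
qed

lemma rl_zero:
  fixes f :: "real \<Rightarrow> real"
  assumes "(f has_real_derivative 0) (at 0)"
  shows "rderiv f 0 = 0" "lderiv f 0 = 0"
proof -
  have L: "((\<lambda>h. (f (0 + h) - f 0) / h) \<longlongrightarrow> 0) (at 0)" using assms unfolding DERIV_def .
  have "((\<lambda>h. (f (0 + h) - f 0) / h) \<longlongrightarrow> 0) (at_right 0)"
    by (rule tendsto_within_subset[OF L]) simp
  then show "rderiv f 0 = 0" unfolding rderiv_def by (intro tendsto_Lim) auto
  have "((\<lambda>h. (f (0 + h) - f 0) / h) \<longlongrightarrow> 0) (at_left 0)"
    by (rule tendsto_within_subset[OF L]) simp
  then show "lderiv f 0 = 0" unfolding lderiv_def by (intro tendsto_Lim) auto
qed


lemma quad_f: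
  fixes f :: "real \<Rightarrow> real"
  assumes cv: "convex_on {-\<delta><..<\<delta>} f" and \<delta>: "\<delta> > 0" and f0: "f 0 = 0"
    and d0: "(f has_real_derivative 0) (at 0)"
    and dr: "(rderiv f has_real_derivative A) (at 0)"
    and dl: "(lderiv f has_real_derivative A) (at 0)"
    and A: "A \<ge> 0" and e: "\<epsilon> > 0"
  shows "\<exists>\<eta>>0. \<forall>x. \<bar>x\<bar> < \<eta> \<longrightarrow> \<bar>f x - A / 2 * x^2\<bar> \<le> \<epsilon> * x^2"
proof -
  obtain \<eta>1 where \<eta>1: "\<eta>1 > 0" "\<And>t. \<bar>t\<bar> < \<eta>1 \<Longrightarrow> \<bar>rderiv f t - A * t\<bar> \<le> \<epsilon> * \<bar>t\<bar>"
    using lin_approx[OF dr rl_zero(1)[OF d0] e] by blast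
  obtain \<eta>2 where \<eta>2: "\<eta>2 > 0" "\<And>t. \<bar>t\<bar> < \<eta>2 \<Longrightarrow> \<bar>lderiv f t - A * t\<bar> \<le> \<epsilon> * \<bar>t\<bar>"
    using lin_approx[OF dl rl_zero(2)[OF d0] e] by blast
  define \<eta> where "\<eta> = min \<delta> (min \<eta>1 \<eta>2)"
  have \<eta>: "\<eta> > 0" "\<eta> \<le> \<delta>" "\<eta> \<le> \<eta>1" "\<eta> \<le> \<eta>2" using \<delta> \<eta>1 \<eta>2 unfolding \<eta>_def by auto
  have fc: "continuous_on {-\<delta><..<\<delta>} f" by (rule convex_on_continuous[OF _ cv]) simp
  have fc0: "isCont f 0" using d0 by (rule DERIV_isCont)
  have R: "\<And>t. \<bar>t\<bar> < \<eta> \<Longrightarrow> \<bar>rderiv f t - A * t\<bar> \<le> \<epsilon> * \<bar>t\<bar>" using \<eta> \<eta>1 by auto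
  have L: "\<And>t. \<bar>t\<bar> < \<eta> \<Longrightarrow> \<bar>lderiv f t - A * t\<bar> \<le> \<epsilon> * \<bar>t\<bar>" using \<eta> \<eta>2 by auto
  have right: "\<bar>f x - A / 2 * x^2\<bar> \<le> \<epsilon> * x^2" if x: "0 \<le> x" "x < \<eta>" for x
  proof (rule quad_approx[where \<eta> = \<eta>, OF fc0 _ f0 e A _ x])
    show "continuous_on {0<..<\<eta>} f" by (rule continuous_on_subset[OF fc]) (use \<eta> in auto)
    fix t h :: real assume th: "0 < t" "0 < h" "t + h < \<eta>"
    have b: "rderiv f t \<le> (f (t + h) - f t) / (t + h - t)" "(f (t + h) - f t) / (t + h - t) \<le> lderiv f (t + h)"
      using rl_deriv_bounds[OF cv, of t "t + h"] th \<eta> unfolding rderiv_def lderiv_def by auto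
    have r: "(A - \<epsilon>) * t \<le> rderiv f t" using R[of t] th by (auto simp: abs_le_iff algebra_simps)
    have l: "lderiv f (t + h) \<le> (A + \<epsilon>) * (t + h)" using L[of "t + h"] th by (auto simp: abs_le_iff algebra_simps)
    have q: "(f (t + h) - f t) / (t + h - t) * h = f (t + h) - f t" using th by simp
    have "h * ((A - \<epsilon>) * t) \<le> h * ((f (t + h) - f t) / (t + h - t))"
      using r b th by (intro mult_left_mono) auto
    moreover have "h * ((f (t + h) - f t) / (t + h - t)) \<le> h * ((A + \<epsilon>) * (t + h))"
      using l b th by (intro mult_left_mono) auto
    ultimately show "h * (A - \<epsilon>) * t \<le> f (t + h) - f t \<and> f (t + h) - f t \<le> h * (A + \<epsilon>) * (t + h)"
      using q by (simp add: algebra_simps)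
  qed
  have left: "\<bar>f (- x) - A / 2 * x^2\<bar> \<le> \<epsilon> * x^2" if x: "0 \<le> x" "x < \<eta>" for x
  proof (rule quad_approx[where \<eta> = \<eta> and \<phi> = "\<lambda>y. f (- y)", OF _ _ _ e A _ x])
    show "isCont (\<lambda>y. f (- y)) 0" by (rule isCont_o2[where f=uminus]) (use fc0 in auto)
    show "continuous_on {0<..<\<eta>} (\<lambda>y. f (- y))"
      by (rule continuous_on_compose2[OF fc]) (use \<eta> in \<open>auto intro!: continuous_intros\<close>)
    show "f (- 0) = 0" using f0 by simp
    fix t h :: real assume th: "0 < t" "0 < h" "t + h < \<eta>"
    have b: "rderiv f (- t - h) \<le> (f (- t) - f (- t - h)) / (- t - (- t - h))"
      "(f (- t) - f (- t - h)) / (- t - (- t - h)) \<le> lderiv f (- t)"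
      using rl_deriv_bounds[OF cv, of "- t - h" "- t"] th \<eta> unfolding rderiv_def lderiv_def by auto
    have r: "- (A + \<epsilon>) * (t + h) \<le> rderiv f (- t - h)" using R[of "- t - h"] th
      by (auto simp: abs_le_iff algebra_simps)
    have l: "lderiv f (- t) \<le> - (A - \<epsilon>) * t" using L[of "- t"] th by (auto simp: abs_le_iff algebra_simps)
    have q: "h * ((f (- t) - f (- t - h)) / (- t - (- t - h))) = f (- t) - f (- t - h)" using th by simp
    have m: "f (- (t + h)) = f (- t - h)" by (rule arg_cong[where f=f]) simp
    have "h * (- (A + \<epsilon>) * (t + h)) \<le> h * ((f (- t) - f (- t - h)) / (- t - (- t - h)))"
      using r b th by (intro mult_left_mono) auto
    moreover have "h * ((f (- t) - f (- t - h)) / (- t - (- t - h))) \<le> h * (- (A - \<epsilon>) * t)"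
      using l b th by (intro mult_left_mono) auto
    ultimately have i1: "h * (- (A + \<epsilon>) * (t + h)) \<le> f (- t) - f (- t - h)"
      and i2: "f (- t) - f (- t - h) \<le> h * (- (A - \<epsilon>) * t)" unfolding q by auto
    show "h * (A - \<epsilon>) * t \<le> f (- (t + h)) - f (- t) \<and> f (- (t + h)) - f (- t) \<le> h * (A + \<epsilon>) * (t + h)"
      unfolding m using i1 i2 by (auto simp: algebra_simps)
  qed
  have "\<bar>f x - A / 2 * x^2\<bar> \<le> \<epsilon> * x^2" if "\<bar>x\<bar> < \<eta>" for x
  proof (cases "x \<ge> 0")
    case True then show ?thesis using right that by simp
  next
    case False then show ?thesis using left[of "- x"] that by simp
  qed
  with \<eta> show ?thesis by blast
qed


lemma sqrt_factor: "(u::real) \<noteq> 0 \<Longrightarrow> sqrt (u^2 + v^2) = \<bar>u\<bar> * sqrt (1 + (v/u)^2)"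
proof -
  assume u: "u \<noteq> 0"
  have "u^2 + v^2 = u^2 * (1 + (v/u)^2)" using u by (simp add: field_simps)
  then show ?thesis by (simp add: real_sqrt_mult)
qed

lemma chi0_eq:
  fixes f :: "real \<Rightarrow> real"
  assumes ab: "a < 0" "0 < b"
  shows "chi0 (a, f a) (0,0) (b, f b) = 2 * \<bar>f b / b - f a / a\<bar> / (b - a) *
     (1 / (sqrt (1 + (f a / a)^2) * sqrt (1 + (f b / b)^2) * sqrt (1 + ((f b - f a) / (b - a))^2)))"
proof -
  have d1: "dist (a, f a) (0,0) = (- a) * sqrt (1 + (f a / a)^2)"
    using sqrt_factor[of a "f a"] ab by (simp add: dist_Pair_Pair dist_real_def)
  have d2: "dist (0,0) (b, f b) = b * sqrt (1 + (f b / b)^2)"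
    using sqrt_factor[of b "f b"] ab by (simp add: dist_Pair_Pair dist_real_def power2_commute)
  have d3: "dist (b, f b) (a, f a) = (b - a) * sqrt (1 + ((f b - f a) / (b - a))^2)"
    using sqrt_factor[of "b - a" "f b - f a"] ab by (simp add: dist_Pair_Pair dist_real_def)
  have "(fst (0::real,0::real) - fst (a, f a)) * (snd (b, f b) - snd (a, f a)) - (fst (b, f b) - fst (a, f a)) * (snd (0::real,0::real) - snd (a, f a))
      = (- a) * b * (f b / b - f a / a)"
    using ab by (simp add: field_simps)
  then have n: "tri_area (a, f a) (0,0) (b, f b) = (- a) * b * \<bar>f b / b - f a / a\<bar> / 2"
    unfolding tri_area_def using ab by (simp add: abs_mult)
  have p: "sqrt (1 + (f a / a)^2) > 0" "sqrt (1 + (f b / b)^2) > 0" "sqrt (1 + ((f b - f a) / (b - a))^2) > 0"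
    by (simp_all add: add_pos_nonneg)
  show ?thesis unfolding chi0_def n d1 d2 d3 using ab p by (simp add: field_simps)
qed


lemma main_limit:
  fixes f :: "real \<Rightarrow> real"
  assumes cv: "convex_on {-\<delta><..<\<delta>} f" and \<delta>: "\<delta> > 0" and f0: "f 0 = 0"
    and d0: "(f has_real_derivative 0) (at 0)"
    and dr: "(rderiv f has_real_derivative A) (at 0)"
    and dl: "(lderiv f has_real_derivative A) (at 0)"
    and A: "A \<ge> 0"
  shows "((\<lambda>z. chi0 (fst z, f (fst z)) (0,0) (snd z, f (snd z))) \<longlongrightarrow> A)
           (at (0,0) within {z. fst z < 0 \<and> 0 < snd z})"
proof -
  define S0 where "S0 = {z::real\<times>real. fst z < 0 \<and> 0 < snd z}"
  define F0 where "F0 = at (0::real,0::real) within S0"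
  have inS0: "eventually (\<lambda>z. z \<in> S0) F0" unfolding F0_def eventually_at_filter by simp
  have fz: "((\<lambda>h. f h / h) \<longlongrightarrow> 0) (at 0)" using d0 f0 unfolding DERIV_def by simp
  have l1: "filterlim fst (at 0) F0" unfolding filterlim_at
  proof
    show "\<forall>\<^sub>F x in F0. fst x \<in> UNIV \<and> fst x \<noteq> 0" using inS0 by (auto simp: S0_def elim!: eventually_mono)
    show "(fst \<longlongrightarrow> 0) F0" unfolding F0_def using tendsto_fst[OF tendsto_ident_at, of "(0::real,0::real)"] by simp
  qed
  have l2: "filterlim snd (at 0) F0" unfolding filterlim_at
  proof
    show "\<forall>\<^sub>F x in F0. snd x \<in> UNIV \<and> snd x \<noteq> 0" using inS0 by (auto simp: S0_def elim!: eventually_mono)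
    show "(snd \<longlongrightarrow> 0) F0" unfolding F0_def using tendsto_snd[OF tendsto_ident_at, of "(0::real,0::real)"] by simp
  qed
  have s1: "((\<lambda>z. f (fst z) / fst z) \<longlongrightarrow> 0) F0" using filterlim_compose[OF fz l1] by simp
  have s2: "((\<lambda>z. f (snd z) / snd z) \<longlongrightarrow> 0) F0" using filterlim_compose[OF fz l2] by simp
  have s3: "((\<lambda>z. (f (snd z) - f (fst z)) / (snd z - fst z)) \<longlongrightarrow> 0) F0"
  proof (rule tendsto_0_le[where K=1])
    show "((\<lambda>z. \<bar>f (fst z) / fst z\<bar> + \<bar>f (snd z) / snd z\<bar>) \<longlongrightarrow> 0) F0"
      using tendsto_add[OF tendsto_rabs_zero[OF s1] tendsto_rabs_zero[OF s2]] by simp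
    show "\<forall>\<^sub>F z in F0. norm ((f (snd z) - f (fst z)) / (snd z - fst z))
        \<le> norm (\<bar>f (fst z) / fst z\<bar> + \<bar>f (snd z) / snd z\<bar>) * 1"
      using inS0
    proof (elim eventually_mono)
      fix z assume "z \<in> S0"
      then obtain a b where z: "z = (a, b)" "a < 0" "0 < b" unfolding S0_def by (cases z) auto
      have nz: "b - a \<noteq> 0" "a \<noteq> 0" "b \<noteq> 0" using z by auto
      have eq: "(f b - f a) / (b - a) = (b / (b - a)) * (f b / b) + ((- a) / (b - a)) * (f a / a)"
        using nz by (simp add: divide_simps)
      have w: "0 \<le> b / (b - a)" "b / (b - a) \<le> 1" "0 \<le> (- a) / (b - a)" "(- a) / (b - a) \<le> 1"
        using z by (auto simp: field_simps)
      have eqb: "\<bar>(b / (b - a)) * (f b / b)\<bar> = (b / (b - a)) * \<bar>f b / b\<bar>"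
        by (simp only: abs_mult abs_of_nonneg[OF w(1)])
      have h1: "\<bar>(b / (b - a)) * (f b / b)\<bar> \<le> \<bar>f b / b\<bar>"
        using eqb mult_left_le_one_le[OF abs_ge_zero w(1) w(2), of "f b / b"] by linarith
      have eqa: "\<bar>((- a) / (b - a)) * (f a / a)\<bar> = ((- a) / (b - a)) * \<bar>f a / a\<bar>"
        by (simp only: abs_mult abs_of_nonneg[OF w(3)])
      have h2: "\<bar>((- a) / (b - a)) * (f a / a)\<bar> \<le> \<bar>f a / a\<bar>"
        using eqa mult_left_le_one_le[OF abs_ge_zero w(3) w(4), of "f a / a"] by linarith
      from h1 h2 have "\<bar>(f b - f a) / (b - a)\<bar> \<le> \<bar>f a / a\<bar> + \<bar>f b / b\<bar>"
        unfolding eq by linarith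
      then show "norm ((f (snd z) - f (fst z)) / (snd z - fst z))
        \<le> norm (\<bar>f (fst z) / fst z\<bar> + \<bar>f (snd z) / snd z\<bar>) * 1" using z by simp
    qed
  qed
  have G: "((\<lambda>z. 1 / (sqrt (1 + (f (fst z) / fst z)^2) * sqrt (1 + (f (snd z) / snd z)^2) *
      sqrt (1 + ((f (snd z) - f (fst z)) / (snd z - fst z))^2))) \<longlongrightarrow> 1) F0"
  proof -
    define g1 where "g1 (z::real\<times>real) = f (fst z) / fst z" for z
    define g2 where "g2 (z::real\<times>real) = f (snd z) / snd z" for z
    define g3 where "g3 z = (f (snd z) - f (fst z)) / (snd z - fst z)" for z
    have t1: "(g1 \<longlongrightarrow> 0) F0" "(g2 \<longlongrightarrow> 0) F0" "(g3 \<longlongrightarrow> 0) F0"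
      using s1 s2 s3 unfolding g1_def g2_def g3_def by auto
    have "((\<lambda>z. 1 / (sqrt (1 + (g1 z)^2) * sqrt (1 + (g2 z)^2) * sqrt (1 + (g3 z)^2))) \<longlongrightarrow>
        1 / (sqrt (1 + 0^2) * sqrt (1 + 0^2) * sqrt (1 + 0^2))) F0"
      by (intro tendsto_intros t1) simp
    then show ?thesis unfolding g1_def g2_def g3_def by simp
  qed
  have N: "((\<lambda>z. 2 * \<bar>f (snd z) / snd z - f (fst z) / fst z\<bar> / (snd z - fst z)) \<longlongrightarrow> A) F0"
    unfolding tendsto_iff
  proof (intro allI impI)
    fix e :: real assume e: "e > 0"
    obtain \<eta> where \<eta>: "\<eta> > 0" "\<And>x. \<bar>x\<bar> < \<eta> \<Longrightarrow> \<bar>f x - A / 2 * x^2\<bar> \<le> e / 3 * x^2"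
      using quad_f[OF cv \<delta> f0 d0 dr dl A, of "e / 3"] e by auto
    have ev: "eventually (\<lambda>z. dist z (0,0) < \<eta>) F0" unfolding F0_def
      using \<eta>(1) by (auto simp: eventually_at intro!: exI[of _ \<eta>])
    show "\<forall>\<^sub>F z in F0. dist (2 * \<bar>f (snd z) / snd z - f (fst z) / fst z\<bar> / (snd z - fst z)) A < e"
      using eventually_conj[OF ev inS0]
    proof (elim eventually_mono)
      fix z assume zz: "dist z (0,0) < \<eta> \<and> z \<in> S0"
      then obtain a b where z: "z = (a, b)" "a < 0" "0 < b" unfolding S0_def by (cases z) auto
      have "\<bar>a\<bar> \<le> dist z (0,0)" "\<bar>b\<bar> \<le> dist z (0,0)"
        using dist_fst_le[of z "(0,0)"] dist_snd_le[of z "(0,0)"] z by (auto simp: dist_real_def)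
      with zz have ab: "\<bar>a\<bar> < \<eta>" "\<bar>b\<bar> < \<eta>" by auto
      have ea: "\<bar>f a / a - A / 2 * a\<bar> \<le> e / 3 * \<bar>a\<bar>"
      proof -
        have "f a / a - A / 2 * a = (f a - A / 2 * a^2) / a"
          using z by (simp add: field_simps power2_eq_square)
        then have "\<bar>f a / a - A / 2 * a\<bar> = \<bar>f a - A / 2 * a^2\<bar> / \<bar>a\<bar>"
          by (simp add: abs_divide)
        also have "\<dots> \<le> e / 3 * a^2 / \<bar>a\<bar>" by (rule divide_right_mono[OF \<eta>(2)[OF ab(1)]]) simp
        also have "\<dots> = e / 3 * \<bar>a\<bar>" using z by (simp add: power2_eq_square field_simps)
        finally show ?thesis .
      qed
      have eb: "\<bar>f b / b - A / 2 * b\<bar> \<le> e / 3 * \<bar>b\<bar>"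
      proof -
        have "f b / b - A / 2 * b = (f b - A / 2 * b^2) / b"
          using z by (simp add: field_simps power2_eq_square)
        then have "\<bar>f b / b - A / 2 * b\<bar> = \<bar>f b - A / 2 * b^2\<bar> / \<bar>b\<bar>"
          by (simp add: abs_divide)
        also have "\<dots> \<le> e / 3 * b^2 / \<bar>b\<bar>" by (rule divide_right_mono[OF \<eta>(2)[OF ab(2)]]) simp
        also have "\<dots> = e / 3 * \<bar>b\<bar>" using z by (simp add: power2_eq_square field_simps)
        finally show ?thesis .
      qed
      define D where "D = f b / b - f a / a"
      have "D - A / 2 * (b - a) = (f b / b - A / 2 * b) - (f a / a - A / 2 * a)"
        unfolding D_def by (simp add: field_simps)
      then have "\<bar>D - A / 2 * (b - a)\<bar> \<le> \<bar>f b / b - A / 2 * b\<bar> + \<bar>f a / a - A / 2 * a\<bar>"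
        by (simp add: abs_triangle_ineq4)
      moreover have "e / 3 * \<bar>a\<bar> + e / 3 * \<bar>b\<bar> = e / 3 * (b - a)" using z by (simp add: algebra_simps)
      ultimately have D: "\<bar>D - A / 2 * (b - a)\<bar> \<le> e / 3 * (b - a)"
        using ea eb by linarith
      have c0: "0 \<le> A / 2 * (b - a)" using A z by simp
      have "\<bar>\<bar>D\<bar> - A / 2 * (b - a)\<bar> \<le> \<bar>D - A / 2 * (b - a)\<bar>"
        using abs_triangle_ineq3[of D "A / 2 * (b - a)"] c0 by (simp only: abs_of_nonneg)
      with D have "\<bar>\<bar>D\<bar> - A / 2 * (b - a)\<bar> \<le> e / 3 * (b - a)" by linarith
      then have "\<bar>2 * \<bar>D\<bar> / (b - a) - A\<bar> \<le> 2 * (e / 3)"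
        using z by (simp add: abs_le_iff field_simps)
      then show "dist (2 * \<bar>f (snd z) / snd z - f (fst z) / fst z\<bar> / (snd z - fst z)) A < e"
        using z e unfolding D_def by (simp add: dist_real_def)
    qed
  qed
  have "((\<lambda>z. 2 * \<bar>f (snd z) / snd z - f (fst z) / fst z\<bar> / (snd z - fst z) *
      (1 / (sqrt (1 + (f (fst z) / fst z)^2) * sqrt (1 + (f (snd z) / snd z)^2) *
      sqrt (1 + ((f (snd z) - f (fst z)) / (snd z - fst z))^2)))) \<longlongrightarrow> A * 1) F0"
    by (rule tendsto_mult[OF N G])
  moreover have "eventually (\<lambda>z. chi0 (fst z, f (fst z)) (0,0) (snd z, f (snd z)) =
      2 * \<bar>f (snd z) / snd z - f (fst z) / fst z\<bar> / (snd z - fst z) *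
      (1 / (sqrt (1 + (f (fst z) / fst z)^2) * sqrt (1 + (f (snd z) / snd z)^2) *
      sqrt (1 + ((f (snd z) - f (fst z)) / (snd z - fst z))^2)))) F0"
    using inS0
  proof (elim eventually_mono)
    fix z :: "real \<times> real" assume "z \<in> S0"
    then show "chi0 (fst z, f (fst z)) (0,0) (snd z, f (snd z)) =
      2 * \<bar>f (snd z) / snd z - f (fst z) / fst z\<bar> / (snd z - fst z) *
      (1 / (sqrt (1 + (f (fst z) / fst z)^2) * sqrt (1 + (f (snd z) / snd z)^2) *
      sqrt (1 + ((f (snd z) - f (fst z)) / (snd z - fst z))^2)))"
      unfolding S0_def using chi0_eq[of "fst z" "snd z" f] by simp
  qed
  ultimately show ?thesis unfolding F0_def S0_def by (simp add: tendsto_cong)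
qed


theorem proposition7p1:
  fixes \<sigma> :: "(real \<times> real) set" and f :: "real \<Rightarrow> real"
    and U :: "(real \<times> real) set" and \<delta> A :: real
  assumes "closed_convex_curve \<sigma>"
    and "(0, 0) \<in> \<sigma>"
    and "open U" and "(0, 0) \<in> U" and "\<delta> > 0"
    and "\<sigma> \<inter> U = {(x, f x) | x. x \<in> {-\<delta><..<\<delta>}} \<inter> U"
    and "convex_on {-\<delta><..<\<delta>} f"
    and "f 0 = 0"
    and "(f has_real_derivative 0) (at 0)"
    and "(rderiv f has_real_derivative A) (at 0)"
    and "(lderiv f has_real_derivative A) (at 0)"
    and "A \<ge> 0"
  shows "osc_curvature_graph \<sigma> (0, 0) A"
proof -
  define W where "W = {(p, m). p \<in> \<sigma> \<and> m \<in> \<sigma> \<and> fst p < fst (0::real, 0::real) \<and> fst (0::real, 0::real) < fst m}"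
  define S0 where "S0 = {z::real\<times>real. fst z < 0 \<and> 0 < snd z}"
  define FF where "FF z = chi0 (fst z, f (fst z)) (0,0) (snd z, f (snd z))" for z :: "real \<times> real"
  define \<Phi> where "\<Phi> z = (fst (fst z), fst (snd z))" for z :: "(real \<times> real) \<times> (real \<times> real)"
  have lim: "(FF \<longlongrightarrow> A) (at (0,0) within S0)"
    unfolding FF_def S0_def using main_limit[OF assms(7,5,8,9,10,11,12)] .
  have inW: "eventually (\<lambda>z. z \<in> W) (at ((0,0),(0,0)) within W)"
    unfolding eventually_at_filter by simp
  have fl: "filterlim \<Phi> (at (0,0) within S0) (at ((0,0),(0,0)) within W)"
    unfolding filterlim_at
  proof
    show "\<forall>\<^sub>F x in at ((0, 0), 0, 0) within W. \<Phi> x \<in> S0 \<and> \<Phi> x \<noteq> (0, 0)"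
      using inW by (elim eventually_mono) (auto simp: W_def S0_def \<Phi>_def)
    have "((\<lambda>z. (fst (fst z), fst (snd z))) \<longlongrightarrow> (fst (fst (((0::real),(0::real)),((0::real),(0::real)))),
        fst (snd (((0::real),(0::real)),((0::real),(0::real))))))
        (at (((0::real),(0::real)),((0::real),(0::real))) within W)"
      by (intro tendsto_intros)
    then show "(\<Phi> \<longlongrightarrow> (0, 0)) (at ((0, 0), 0, 0) within W)" unfolding \<Phi>_def by simp
  qed
  have c1: "((\<lambda>z. FF (\<Phi> z)) \<longlongrightarrow> A) (at ((0,0),(0,0)) within W)"
    using filterlim_compose[OF lim fl] by (simp add: comp_def)
  have UU: "eventually (\<lambda>z. z \<in> U \<times> U) (at ((0,0),(0,0)) within W)"
    unfolding eventually_at_topological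
    by (rule exI[of _ "U \<times> U"]) (use assms(3,4) in \<open>auto intro: open_Times\<close>)
  have graph: "p = (fst p, f (fst p))" if "p \<in> \<sigma>" "p \<in> U" for p
  proof -
    have "p \<in> \<sigma> \<inter> U" using that by simp
    then have "p \<in> {(x, f x) | x. x \<in> {-\<delta><..<\<delta>}}" using assms(6) by simp
    then show ?thesis by auto
  qed
  have ev: "eventually (\<lambda>z. FF (\<Phi> z) = (\<lambda>(p, m). chi0 p (0,0) m) z) (at ((0,0),(0,0)) within W)"
    using eventually_conj[OF inW UU]
  proof (elim eventually_mono)
    fix z assume z: "z \<in> W \<and> z \<in> U \<times> U"
    obtain p m where pm: "z = (p, m)" by (cases z)
    have "p = (fst p, f (fst p))" "m = (fst m, f (fst m))"
      using z graph unfolding pm W_def by auto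
    then show "FF (\<Phi> z) = (\<lambda>(p, m). chi0 p (0,0) m) z"
      unfolding FF_def \<Phi>_def pm by simp
  qed
  have "((\<lambda>(p, m). chi0 p (0,0) m) \<longlongrightarrow> A) (at ((0,0),(0,0)) within W)"
    using tendsto_cong[OF ev] c1 by simp
  then show ?thesis unfolding osc_curvature_graph_def W_def by simp
qed

end
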